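(* If $G$ is a (finite, loopless) multigraph and $v\in V(G)$, then \[\sum_{u\in N(v)}\frac{\mu(uv)}{d(v) + \mu(uv)} \leq \frac{|N(v)|}{1 + |N(v)|}.\]
   Context: $N(v)$ is the set of vertices adjacent to $v$, $\mu(uv)$ is the number of edges of $G$ incident to both $u$ and $v$, and $d(v)=\sum_{u\in N(v)}\mu(uv)$. *)

theory Defs
  imports Complex_Main
begin

text \<open>A finite loopless multigraph is given by a finite vertex set V and an edge
multiplicity function mu: mu u v is the number of edges joining u and v.\<close>

definition multigraph :: "'a set \<Rightarrow> ('a \<Rightarrow> 'a \<Rightarrow> nat) \<Rightarrow> bool" where
  "multigraph V mu \<longleftrightarrow> finite V
     \<and> (\<forall>u v. mu u v = mu v u)
     \<and> (\<forall>v. mu v v = 0)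
     \<and> (\<forall>u v. mu u v > 0 \<longrightarrow> u \<in> V \<and> v \<in> V)"

definition nbhd :: "'a set \<Rightarrow> ('a \<Rightarrow> 'a \<Rightarrow> nat) \<Rightarrow> 'a \<Rightarrow> 'a set" where
  "nbhd V mu v = {u \<in> V. mu u v > 0}"

definition deg :: "'a set \<Rightarrow> ('a \<Rightarrow> 'a \<Rightarrow> nat) \<Rightarrow> 'a \<Rightarrow> nat" where
  "deg V mu v = (\<Sum>u\<in>nbhd V mu v. mu u v)"

end

theory Submission
  imports Defs
begin

lemma tangent:
  fixes a d n :: real
  assumes "a \<ge> 0" "d > 0" "n > 0"
  shows "a / (d + a) \<le> 1/(n+1) + (n^2*a - n*d)/(d*(n+1)^2)"
proof -
  have "(n+1)^2 * a * d \<le> (d+a)*(d + n^2*a)"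
  proof -
    have "(d+a)*(d + n^2*a) - (n+1)^2 * a * d = (d - n*a)^2"
      by (simp add: algebra_simps power2_eq_square)
    thus ?thesis by (smt (verit) zero_le_power2)
  qed
  moreover have "1/(n+1) + (n^2*a - n*d)/(d*(n+1)^2) = (d + n^2*a)/(d*(n+1)^2)"
  proof -
    have p: "d*(n+1)^2 > 0" "n+1 > 0" using assms by auto
    show ?thesis using p assms by (simp add: divide_simps) (simp add: algebra_simps power2_eq_square)
  qed
  ultimately show ?thesis using assms
    by (simp add: divide_simps) (simp add: algebra_simps power2_eq_square)
qed

theorem lemma6p5:
  fixes V :: "'a set" and mu :: "'a \<Rightarrow> 'a \<Rightarrow> nat" and v :: 'a
  assumes "multigraph V mu" and "v \<in> V"
  shows "(\<Sum>u\<in>nbhd V mu v. real (mu u v) / (real (deg V mu v) + real (mu u v)))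
           \<le> real (card (nbhd V mu v)) / (1 + real (card (nbhd V mu v)))"
proof -
  define N where "N = nbhd V mu v"
  define d where "d = real (deg V mu v)"
  define n where "n = real (card N)"
  have fin: "finite N" using assms(1) unfolding multigraph_def N_def nbhd_def by auto
  have dsum: "d = (\<Sum>u\<in>N. real (mu u v))" unfolding d_def deg_def N_def by simp
  show ?thesis
  proof (cases "N = {}")
    case True thus ?thesis unfolding N_def by simp
  next
    case False
    then obtain w where w: "w \<in> N" by auto
    have np: "n > 0" using fin False unfolding n_def by (simp add: card_gt_0_iff)
    have "real (mu w v) > 0" using w unfolding N_def nbhd_def by auto
    moreover have "real (mu w v) \<le> d" unfolding dsum
      using fin w by (intro member_le_sum) auto
    ultimately have dp: "d > 0" by linarith
    have "(\<Sum>u\<in>N. real (mu u v) / (d + real (mu u v)))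
       \<le> (\<Sum>u\<in>N. 1/(n+1) + (n^2*real (mu u v) - n*d)/(d*(n+1)^2))"
      by (intro sum_mono tangent) (use dp np in auto)
    also have "\<dots> = n/(n+1) + (n^2*d - n*n*d)/(d*(n+1)^2)"
      unfolding sum.distrib dsum
      by (simp add: n_def sum_divide_distrib[symmetric] sum_subtractf sum_distrib_left[symmetric])
    also have "\<dots> = n/(1+n)" by (simp add: power2_eq_square add.commute)
    finally show ?thesis unfolding N_def[symmetric] d_def[symmetric] n_def by simp
  qed
qed

end
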